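(* Let $\frac{1}{2}\leq \alpha <1$ and let $G$ be a graph with $n$ vertices and $m$ edges. If $1\leq k\leq n-1$, then $$S_{k}(A_{\alpha}(G))\leq \frac{2\alpha km}{n}+\sqrt{\frac{k(n-k)}{n}\left(\alpha^2Z_1+2m(1-\alpha)^2-\frac{4\alpha^2m^2}{n}\right)},$$ where $Z_1$ is the first Zagreb index of $G$.
   Context: All graphs are simple and undirected. $A_{\alpha}(G)=\alpha D(G)+(1-\alpha)A(G)$, where $A(G)$ is the adjacency matrix and $D(G)$ the diagonal matrix of vertex degrees. For a real symmetric matrix $M$ with eigenvalues $\lambda_1(M)\geq\cdots\geq\lambda_n(M)$, $S_k(M)=\sum_{i=1}^k\lambda_i(M)$. The first Zagreb index $Z_1=Z_1(G)=\sum_{v\in V(G)} d_v^2$ is the sum of the squares of the vertex degrees. *)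

theory Defs
  imports "Jordan_Normal_Form.Char_Poly" Complex_Main
begin

definition simple_graph :: "nat \<Rightarrow> (nat \<Rightarrow> nat \<Rightarrow> bool) \<Rightarrow> bool" where
  "simple_graph n E \<longleftrightarrow> (\<forall>i<n. \<forall>j<n. E i j \<longleftrightarrow> E j i) \<and> (\<forall>i<n. \<not> E i i)"

definition num_edges :: "nat \<Rightarrow> (nat \<Rightarrow> nat \<Rightarrow> bool) \<Rightarrow> nat" where
  "num_edges n E = card {(i, j). i < j \<and> j < n \<and> E i j}"

definition degree :: "nat \<Rightarrow> (nat \<Rightarrow> nat \<Rightarrow> bool) \<Rightarrow> nat \<Rightarrow> nat" where
  "degree n E i = card {j. j < n \<and> E i j}"

definition adj_mat :: "nat \<Rightarrow> (nat \<Rightarrow> nat \<Rightarrow> bool) \<Rightarrow> real mat" where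
  "adj_mat n E = mat n n (\<lambda>(i, j). if E i j then 1 else 0)"

definition deg_mat :: "nat \<Rightarrow> (nat \<Rightarrow> nat \<Rightarrow> bool) \<Rightarrow> real mat" where
  "deg_mat n E = mat n n (\<lambda>(i, j). if i = j then real (degree n E i) else 0)"

definition A_alpha :: "real \<Rightarrow> nat \<Rightarrow> (nat \<Rightarrow> nat \<Rightarrow> bool) \<Rightarrow> real mat" where
  "A_alpha \<alpha> n E = \<alpha> \<cdot>\<^sub>m deg_mat n E + (1 - \<alpha>) \<cdot>\<^sub>m adj_mat n E"

definition zagreb1 :: "nat \<Rightarrow> (nat \<Rightarrow> nat \<Rightarrow> bool) \<Rightarrow> real" where
  "zagreb1 n E = (\<Sum>i<n. real (degree n E i) ^ 2)"

text \<open>Eigenvalues (with multiplicity) of a real matrix whose characteristic polynomial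
  splits over the reals (e.g. a real symmetric matrix), listed in non-increasing order
  lambda_1 >= ... >= lambda_n.\<close>
definition eigenvalues_desc :: "real mat \<Rightarrow> real list" where
  "eigenvalues_desc M = (THE es. sorted_wrt (\<ge>) es \<and> char_poly M = (\<Prod>a\<leftarrow>es. [:- a, 1:]))"

definition S_k :: "nat \<Rightarrow> real mat \<Rightarrow> real" where
  "S_k k M = sum_list (take k (eigenvalues_desc M))"

end

theory Submission
  imports Defs "Jordan_Normal_Form.Schur_Decomposition"
begin


lemma prod_lin_root:
  fixes es :: "real list"
  shows "poly (\<Prod>a\<leftarrow>es. [:- a, 1:]) x = 0 \<longleftrightarrow> x \<in> set es"
  by (induction es) auto

lemma prod_list_map_remove1':
  fixes f :: "'a \<Rightarrow> 'b::comm_monoid_mult"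
  assumes "a \<in> set es"
  shows "prod_list (map f es) = f a * prod_list (map f (remove1 a es))"
  using assms by (induction es) (auto simp: ac_simps)

lemma prod_lin_mset:
  fixes es :: "real list"
  shows "(\<Prod>a\<leftarrow>es. [:- a, 1:]) = (\<Prod>a\<leftarrow>fs. [:- a, 1:]) \<Longrightarrow> mset es = mset fs"
proof (induction es arbitrary: fs)
  case Nil
  show ?case
  proof (cases fs)
    case (Cons b fs')
    have "poly (\<Prod>a\<leftarrow>fs. [:- a, 1:]) b = 0" using Cons prod_lin_root by auto
    with Nil show ?thesis by simp
  qed simp
next
  case (Cons a es)
  have "poly (\<Prod>a\<leftarrow>fs. [:- a, 1:]) a = 0" 
    using Cons.prems[symmetric] by simp
  hence a: "a \<in> set fs" using prod_lin_root by blast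
  have "[:- a, 1:] * (\<Prod>a\<leftarrow>es. [:- a, 1:]) = [:- a, 1:] * (\<Prod>a\<leftarrow>remove1 a fs. [:- a, 1:])"
    using Cons.prems prod_list_map_remove1'[OF a, of "\<lambda>a. [:- a, 1:]"] by simp
  hence "(\<Prod>a\<leftarrow>es. [:- a, 1:]) = (\<Prod>a\<leftarrow>remove1 a fs. [:- a, 1:])"
    by (subst (asm) mult_left_cancel) auto
  from Cons.IH[OF this] a show ?case by simp
qed

lemma sorted_desc_unique:
  fixes es fs :: "real list"
  assumes "sorted_wrt (\<ge>) es" "sorted_wrt (\<ge>) fs" "mset es = mset fs"
  shows "es = fs"
proof -
  have "sorted (rev es)" "sorted (rev fs)" using assms by (simp_all add: sorted_wrt_rev)
  hence "sort (rev fs) = rev es" "sort (rev fs) = rev fs"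
    using assms(3) by (metis mset_rev properties_for_sort)+
  thus ?thesis by simp
qed



lemma herm_eig_real:
  fixes M :: "real mat" and a :: complex and v :: "complex vec"
  assumes M: "M \<in> carrier_mat n n" and sym: "\<And>i j. i<n \<Longrightarrow> j<n \<Longrightarrow> M$$(i,j) = M$$(j,i)"
    and ev: "eigenvector (map_mat complex_of_real M) v a"
  shows "a = complex_of_real (Re a)"
proof -
  let ?M = "map_mat complex_of_real M"
  from ev M have v: "v \<in> carrier_vec n" and v0: "v \<noteq> 0\<^sub>v n" and eq: "?M *\<^sub>v v = a \<cdot>\<^sub>v v"
    unfolding eigenvector_def by auto
  have comp: "(\<Sum>j<n. complex_of_real (M$$(i,j)) * v$j) = a * v$i" if "i<n" for i
  proof -
    have "(?M *\<^sub>v v) $ i = (a \<cdot>\<^sub>v v) $ i" using eq by simp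
    thus ?thesis using that M v by (simp add: mult_mat_vec_def scalar_prod_def row_def atLeast0LessThan)
  qed
  define S where "S = (\<Sum>i<n. \<Sum>j<n. cnj (v$i) * complex_of_real (M$$(i,j)) * v$j)"
  define N where "N = (\<Sum>i<n. cnj (v$i) * v$i)"
  have "S = (\<Sum>i<n. cnj (v$i) * (\<Sum>j<n. complex_of_real (M$$(i,j)) * v$j))"
    unfolding S_def by (simp add: sum_distrib_left mult.assoc)
  also have "\<dots> = (\<Sum>i<n. a * (cnj (v$i) * v$i))"
    by (intro sum.cong refl) (simp add: comp)
  also have "\<dots> = a * N" unfolding N_def by (simp add: sum_distrib_left)
  finally have S1: "S = a * N" .
  have "cnj S = (\<Sum>i<n. \<Sum>j<n. v$i * complex_of_real (M$$(i,j)) * cnj (v$j))"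
    unfolding S_def by (simp add: cnj_sum)
  also have "\<dots> = (\<Sum>j<n. \<Sum>i<n. v$i * complex_of_real (M$$(i,j)) * cnj (v$j))"
    by (rule sum.swap)
  also have "\<dots> = S" unfolding S_def
    by (intro sum.cong refl, simp add: sym mult_ac)
  finally have S2: "cnj S = S" .
  have Nr: "N = complex_of_real (\<Sum>i<n. (cmod (v$i))^2)"
    unfolding N_def of_real_sum by (intro sum.cong refl) (simp only: complex_norm_square mult.commute)
  have "\<exists>i<n. v$i \<noteq> 0" using v v0 by (metis eq_vecI carrier_vecD index_zero_vec(1) index_zero_vec(2))
  then obtain i where i: "i<n" "v$i \<noteq> 0" by auto
  have "(\<Sum>i<n. (cmod (v$i))^2) > 0"
    by (rule sum_pos2[of _ i]) (use i in auto)
  hence "(\<Sum>i<n. (cmod (v$i))^2) \<noteq> 0" by linarith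
  hence N0: "N \<noteq> 0" unfolding Nr of_real_eq_0_iff .
  have cN: "cnj N = N" unfolding Nr by simp
  have "cnj a * N = cnj S" using S1 cN by simp
  also note S2
  also note S1
  finally have "cnj a * N = a * N" .
  hence "cnj a = a" using N0 by simp
  thus ?thesis by (simp add: complex_eq_iff)
qed

lemma real_sym_splits:
  fixes M :: "real mat"
  assumes M: "M \<in> carrier_mat n n" and sym: "\<And>i j. i<n \<Longrightarrow> j<n \<Longrightarrow> M$$(i,j) = M$$(j,i)"
  shows "\<exists>es. char_poly M = (\<Prod>a\<leftarrow>es. [:- a, 1:])"
proof -
  let ?M = "map_mat complex_of_real M"
  have Mc: "?M \<in> carrier_mat n n" using M by simp
  obtain as where as: "char_poly ?M = (\<Prod>a\<leftarrow>as. [:- a, 1:])"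
    using char_poly_factorized[OF Mc] by auto
  have cp: "char_poly ?M = map_poly complex_of_real (char_poly M)"
    by (rule of_real_hom.char_poly_hom[OF M])
  have re: "a = complex_of_real (Re a)" if "a \<in> set as" for a
  proof -
    have "poly (char_poly ?M) a = 0" using that unfolding as
      by (induction as) auto
    hence "eigenvalue ?M a" using eigenvalue_root_char_poly[OF Mc] by simp
    then obtain v where "eigenvector ?M v a" unfolding eigenvalue_def by auto
    from herm_eig_real[OF M sym this] show ?thesis by auto
  qed
  interpret mh: map_poly_inj_comm_ring_hom complex_of_real ..
  have "map_poly complex_of_real (\<Prod>a\<leftarrow>map Re as. [:- a, 1:]) = (\<Prod>a\<leftarrow>as. [:- a, 1:])"
    using re by (induction as) (auto simp: hom_distribs)
  hence "map_poly complex_of_real (char_poly M) = map_poly complex_of_real (\<Prod>a\<leftarrow>map Re as. [:- a, 1:])"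
    using as cp by simp
  hence "char_poly M = (\<Prod>a\<leftarrow>map Re as. [:- a, 1:])"
    by (rule mh.injectivity)
  thus ?thesis by blast
qed


definition mtr :: "'a::comm_ring_1 mat \<Rightarrow> 'a" where "mtr A = (\<Sum>i<dim_row A. A$$(i,i))"

lemma mtr_mult: assumes "A \<in> carrier_mat n n" "B \<in> carrier_mat n n"
  shows "mtr (A*B) = (\<Sum>i<n. \<Sum>j<n. A$$(i,j) * B$$(j,i))"
  using assms unfolding mtr_def by (simp add: scalar_prod_def atLeast0LessThan)

lemma mtr_comm: assumes "A \<in> carrier_mat n n" "B \<in> carrier_mat n n"
  shows "mtr (A*B) = mtr (B*A)"
  unfolding mtr_mult[OF assms] mtr_mult[OF assms(2,1)]
  by (subst sum.swap) (simp add: mult.commute)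

lemma mtr_sim: assumes "X \<in> carrier_mat n n" "P \<in> carrier_mat n n" "Q \<in> carrier_mat n n" "Q * P = 1\<^sub>m n"
  shows "mtr (P * X * Q) = mtr X"
proof -
  have "mtr (P * X * Q) = mtr (P * (X * Q))" using assms by (simp add: assoc_mult_mat)
  also have "\<dots> = mtr ((X * Q) * P)" using assms by (intro mtr_comm) auto
  also have "\<dots> = mtr (X * (Q * P))" using assms by (simp add: assoc_mult_mat)
  also have "\<dots> = mtr X" using assms by simp
  finally show ?thesis .
qed

lemma schur_sums:
  fixes M :: "real mat"
  assumes M: "M \<in> carrier_mat n n" and cp: "char_poly M = (\<Prod>a\<leftarrow>es. [:- a, 1:])"
  shows "sum_list es = mtr M" "sum_list (map (\<lambda>x. x^2) es) = mtr (M * M)"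
proof -
  obtain B P Q where sd: "schur_decomposition M es = (B,P,Q)" by (cases "schur_decomposition M es") auto
  from schur_decomposition[OF M cp sd] have sw: "similar_mat_wit M B P Q" and ut: "upper_triangular B"
    and dg: "diag_mat B = es" by auto
  from sw M have B: "B \<in> carrier_mat n n" and P: "P \<in> carrier_mat n n" and Q: "Q \<in> carrier_mat n n"
    and QP: "Q * P = 1\<^sub>m n" and PQ: "P * Q = 1\<^sub>m n" and MB: "M = P * B * Q"
    unfolding similar_mat_wit_def Let_def by auto
  have dsum: "sum_list (map f es) = (\<Sum>i<n. f (B$$(i,i)))" for f :: "real \<Rightarrow> real"
    unfolding dg[symmetric] diag_mat_def using B
    by (simp add: sum_list_distinct_conv_sum_set atLeast0LessThan[symmetric])
  have "mtr M = mtr B" unfolding MB by (rule mtr_sim[OF B P Q QP])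
  also have "\<dots> = sum_list es" using dsum[of "\<lambda>x. x"] B by (simp add: mtr_def)
  finally show "sum_list es = mtr M" by simp
  have "M * M = P * (B * B) * Q"
  proof -
    have e: "P * (B * B) * Q = P * (B * ((Q * P) * B)) * Q" using QP B by simp
    show ?thesis unfolding e MB using B P Q
      by (simp add: assoc_mult_mat[of _ n n _ n _ n] mult_carrier_mat[of _ n n _ n])
  qed
  hence "mtr (M * M) = mtr (B * B)" using mtr_sim[OF _ P Q QP, of "B*B"] B by simp
  also have "\<dots> = (\<Sum>i<n. \<Sum>j<n. B$$(i,j) * B$$(j,i))" by (rule mtr_mult[OF B B])
  also have "\<dots> = (\<Sum>i<n. B$$(i,i)^2)"
  proof (intro sum.cong refl)
    fix i assume i: "i \<in> {..<n}"
    have "(\<Sum>j<n. B$$(i,j) * B$$(j,i)) = (\<Sum>j\<in>{i}. B$$(i,j) * B$$(j,i))"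
    proof (rule sum.mono_neutral_right)
      show "\<forall>j\<in>{..<n} - {i}. B$$(i,j) * B$$(j,i) = 0"
      proof
        fix j assume j: "j \<in> {..<n} - {i}"
        show "B$$(i,j) * B$$(j,i) = 0"
        proof (cases "j < i")
          case True thus ?thesis using ut B i unfolding upper_triangular_def by auto
        next
          case False hence "i < j" using j by auto
          thus ?thesis using ut B j unfolding upper_triangular_def by auto
        qed
      qed
    qed (use i in auto)
    thus "(\<Sum>j<n. B$$(i,j) * B$$(j,i)) = B$$(i,i)^2" by (simp add: power2_eq_square)
  qed
  also have "\<dots> = sum_list (map (\<lambda>x. x^2) es)" using dsum[of "\<lambda>x. x^2"] by simp
  finally show "sum_list (map (\<lambda>x. x^2) es) = mtr (M * M)" by simp
qed


lemma handshake:
  assumes g: "simple_graph n E"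
  shows "(\<Sum>i<n. real (degree n E i)) = 2 * real (num_edges n E)"
proof -
  let ?S = "SIGMA i:{..<n}. {j. j<n \<and> E i j}"
  let ?L = "{(i, j). i < j \<and> j < n \<and> E i j}"
  let ?U = "{(i, j). j < i \<and> i < n \<and> E i j}"
  have fL: "finite ?L" by (rule finite_subset[of _ "{..<n} \<times> {..<n}"]) auto
  have fU: "finite ?U" by (rule finite_subset[of _ "{..<n} \<times> {..<n}"]) auto
  have "(\<Sum>i<n. degree n E i) = card ?S"
    unfolding degree_def by (subst card_SigmaI) auto
  also have "?S = ?L \<union> ?U" using g unfolding simple_graph_def
    by (auto simp: linorder_neq_iff, metis le_neq_implies_less not_less)
  also have "card (?L \<union> ?U) = card ?L + card ?U" by (rule card_Un_disjoint[OF fL fU]) auto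
  also have "card ?U = card ?L"
  proof (rule bij_betw_same_card[of "\<lambda>(i,j). (j,i)"])
    show "bij_betw (\<lambda>(i, j). (j, i)) ?U ?L"
      by (rule bij_betwI[of _ _ _ "\<lambda>(i,j). (j,i)"]) (use g in \<open>auto simp: simple_graph_def\<close>)
  qed
  finally have "(\<Sum>i<n. degree n E i) = 2 * num_edges n E" unfolding num_edges_def by simp
  hence "real (\<Sum>i<n. degree n E i) = real (2 * num_edges n E)" by simp
  thus ?thesis by simp
qed

lemma A_alpha_carrier: "A_alpha \<alpha> n E \<in> carrier_mat n n"
  unfolding A_alpha_def deg_mat_def adj_mat_def by auto

lemma A_alpha_index: "i < n \<Longrightarrow> j < n \<Longrightarrow> A_alpha \<alpha> n E $$ (i,j) =
   (if i = j then \<alpha> * real (degree n E i) else 0) + (1 - \<alpha>) * (if E i j then 1 else 0)"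
  unfolding A_alpha_def deg_mat_def adj_mat_def by auto

lemma A_alpha_sym: assumes g: "simple_graph n E"
  shows "i < n \<Longrightarrow> j < n \<Longrightarrow> A_alpha \<alpha> n E $$ (i,j) = A_alpha \<alpha> n E $$ (j,i)"
  using g unfolding A_alpha_index simple_graph_def by auto

lemma deg_sum: "(\<Sum>j<n. (if E i j then 1 else 0) :: real) = real (degree n E i)"
proof -
  have "(\<Sum>j<n. (if E i j then 1 else 0) :: real) = (\<Sum>j\<in>{j\<in>{..<n}. E i j}. 1)"
    by (rule sum.inter_filter[symmetric]) simp
  also have "{j\<in>{..<n}. E i j} = {j. j < n \<and> E i j}" by auto
  also have "(\<Sum>j\<in>{j. j < n \<and> E i j}. (1::real)) = real (degree n E i)" unfolding degree_def by simp
  finally show ?thesis .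
qed

lemma row_sq: assumes g: "simple_graph n E" and i: "i < n"
  shows "(\<Sum>j<n. A_alpha \<alpha> n E $$ (i,j) * A_alpha \<alpha> n E $$ (j,i))
     = \<alpha>^2 * real (degree n E i)^2 + (1-\<alpha>)^2 * real (degree n E i)"
proof -
  have nE: "\<not> E i i" using g i unfolding simple_graph_def by auto
  have "(\<Sum>j<n. A_alpha \<alpha> n E $$ (i,j) * A_alpha \<alpha> n E $$ (j,i))
     = (\<Sum>j<n. (if j = i then (\<alpha> * real (degree n E i))^2 else 0) + (1-\<alpha>)^2 * (if E i j then 1 else 0))"
  proof (intro sum.cong refl)
    fix j assume j: "j \<in> {..<n}"
    show "A_alpha \<alpha> n E $$ (i,j) * A_alpha \<alpha> n E $$ (j,i) =
      (if j = i then (\<alpha> * real (degree n E i))^2 else 0) + (1-\<alpha>)^2 * (if E i j then 1 else 0)"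
      using j i nE A_alpha_sym[OF g i, of j \<alpha>] by (auto simp: A_alpha_index power2_eq_square)
  qed
  also have "\<dots> = (\<alpha> * real (degree n E i))^2 + (1-\<alpha>)^2 * real (degree n E i)"
    using i by (simp add: sum.distrib sum_distrib_left[symmetric] deg_sum)
  finally show ?thesis by (simp add: power_mult_distrib)
qed



lemma cs_sum:
  fixes x :: "nat \<Rightarrow> real"
  assumes "finite I"
  shows "(\<Sum>i\<in>I. x i)^2 \<le> real (card I) * (\<Sum>i\<in>I. (x i)^2)"
proof (cases "I = {}")
  case True thus ?thesis by simp
next
  case False
  define c where "c = real (card I)"
  have c: "c > 0" using False assms unfolding c_def by (simp add: card_gt_0_iff)
  define t where "t = (\<Sum>i\<in>I. x i)"
  define Q where "Q = (\<Sum>i\<in>I. (x i)^2)"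
  define m where "m = t / c"
  have "0 \<le> (\<Sum>i\<in>I. (x i - m)^2)" by (rule sum_nonneg) simp
  also have "\<dots> = (\<Sum>i\<in>I. (x i)^2 - 2 * m * x i + m^2)"
    by (intro sum.cong refl) (simp add: power2_eq_square algebra_simps)
  also have "\<dots> = Q - 2 * m * t + c * m^2"
    unfolding Q_def t_def c_def by (simp add: sum.distrib sum_subtractf sum_distrib_left)
  also have "\<dots> = Q - t^2 / c" unfolding m_def using c by (simp add: field_simps power2_eq_square)
  finally have "t^2 / c \<le> Q" by simp
  hence "t^2 \<le> c * Q" using c by (simp add: field_simps)
  thus ?thesis unfolding t_def c_def Q_def .
qed

lemma alg_bound:
  fixes a b qa qb K L :: real
  assumes K: "K > 0" and L: "L > 0" and ha: "a^2 \<le> K * qa" and hb: "b^2 \<le> L * qb"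
  shows "(a - K * (a + b) / (K + L))^2 \<le> K * L / (K + L) * ((qa + qb) - (a + b)^2 / (K + L))"
proof -
  have qa: "a^2 / K \<le> qa" using ha K by (simp add: field_simps)
  have qb: "b^2 / L \<le> qb" using hb L by (simp add: field_simps)
  have h1: "a - K * (a + b) / (K + L) = (L * a - K * b) / (K + L)"
    using K L by (simp add: field_simps)
  have S: "K + L > 0" using K L by simp
  have h2a: "a^2/K + b^2/L - (a + b)^2 / (K + L) = (L * a - K * b)^2 / (K * L * (K + L))"
    using K L S by (simp add: divide_simps) (simp add: power2_eq_square algebra_simps)
  have h2: "K * L / (K + L) * ((a^2/K + b^2/L) - (a + b)^2 / (K + L)) = (L * a - K * b)^2 / (K + L)^2"
    unfolding h2a using K L S by (simp add: divide_simps power2_eq_square)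
  have "(a - K * (a + b) / (K + L))^2 = K * L / (K + L) * ((a^2/K + b^2/L) - (a + b)^2 / (K + L))"
    unfolding h1 h2 by (simp add: power_divide)
  also have "\<dots> \<le> K * L / (K + L) * ((qa + qb) - (a + b)^2 / (K + L))"
    by (rule mult_left_mono) (use qa qb K L in auto)
  finally show ?thesis .
qed

lemma topk_bound:
  fixes es :: "real list"
  assumes len: "length es = n" and k: "1 \<le> k" "k < n"
  shows "sum_list (take k es) \<le> real k * sum_list es / real n
     + sqrt (real k * (real n - real k) / real n * (sum_list (map (\<lambda>x. x^2) es) - (sum_list es)^2 / real n))"
proof -
  define e where "e i = es ! i" for i
  define a where "a = (\<Sum>i<k. e i)"
  define b where "b = (\<Sum>i\<in>{k..<n}. e i)"
  define qa where "qa = (\<Sum>i<k. (e i)^2)"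
  define qb where "qb = (\<Sum>i\<in>{k..<n}. (e i)^2)"
  have split: "(\<Sum>i<n. f i) = (\<Sum>i<k. f i) + (\<Sum>i\<in>{k..<n}. f i)" for f :: "nat \<Rightarrow> real"
  proof -
    have "{..<n} = {..<k} \<union> {k..<n}" using k by auto
    moreover have "sum f ({..<k} \<union> {k..<n}) = sum f {..<k} + sum f {k..<n}"
      by (rule sum.union_disjoint) auto
    ultimately show ?thesis by simp
  qed
  have sa: "sum_list (take k es) = a" unfolding a_def e_def using len k
    by (simp add: sum_list_sum_nth atLeast0LessThan min_def)
  have ss: "sum_list es = a + b" unfolding a_def b_def e_def using len
    by (simp add: sum_list_sum_nth atLeast0LessThan split)
  have sq: "sum_list (map (\<lambda>x. x^2) es) = qa + qb" unfolding qa_def qb_def e_def using len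
    by (simp add: sum_list_sum_nth atLeast0LessThan split)
  have K: "real k > 0" and L: "real n - real k > 0" using k by auto
  have nKL: "real n = real k + (real n - real k)" by simp
  have ha: "a^2 \<le> real k * qa" unfolding a_def qa_def using cs_sum[of "{..<k}" e] by simp
  have hb: "b^2 \<le> (real n - real k) * qb" unfolding b_def qb_def using cs_sum[of "{k..<n}" e] k by simp
  have main: "(a - real k * (a + b) / real n)^2 \<le> real k * (real n - real k) / real n * ((qa + qb) - (a + b)^2 / real n)"
    using alg_bound[OF K L ha hb] nKL by simp
  have "a = real k * (a + b) / real n + (a - real k * (a + b) / real n)" by simp
  also have "\<dots> \<le> real k * (a + b) / real n + sqrt ((a - real k * (a + b) / real n)^2)"
    by (simp add: real_sqrt_abs)
  also have "\<dots> \<le> real k * (a + b) / real n + sqrt (real k * (real n - real k) / real n * ((qa + qb) - (a + b)^2 / real n))"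
    using real_sqrt_le_mono[OF main] by (rule add_left_mono)
  finally show ?thesis using sa ss sq by simp
qed

lemma degree_prod_lin: "Polynomial.degree (\<Prod>a\<leftarrow>es. [:- a, 1:] :: real poly) = length es"
proof (induction es)
  case (Cons a es)
  have "(\<Prod>a\<leftarrow>es. [:- a, 1:] :: real poly) \<noteq> 0" by (auto simp: prod_list_zero_iff)
  hence "Polynomial.degree ([:- a, 1:] * (\<Prod>a\<leftarrow>es. [:- a, 1:] :: real poly)) = 1 + length es"
    using Cons.IH by (subst degree_mult_eq) auto
  thus ?case by simp
qed simp
theorem theorem3p2:
  fixes \<alpha> :: real and n k :: nat and E :: "nat \<Rightarrow> nat \<Rightarrow> bool"
  assumes "1/2 \<le> \<alpha>" and "\<alpha> < 1"
    and "simple_graph n E"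
    and "1 \<le> k" and "k \<le> n - 1"
  shows "S_k k (A_alpha \<alpha> n E) \<le>
    2 * \<alpha> * real k * real (num_edges n E) / real n
    + sqrt (real k * (real n - real k) / real n *
        (\<alpha>^2 * zagreb1 n E + 2 * real (num_edges n E) * (1 - \<alpha>)^2
         - 4 * \<alpha>^2 * real (num_edges n E)^2 / real n))"
proof -
  note g = assms(3)
  define M where "M = A_alpha \<alpha> n E"
  define m where "m = real (num_edges n E)"
  have Mc: "M \<in> carrier_mat n n" unfolding M_def by (rule A_alpha_carrier)
  have sym: "\<And>i j. i<n \<Longrightarrow> j<n \<Longrightarrow> M$$(i,j) = M$$(j,i)" unfolding M_def by (rule A_alpha_sym[OF g])
  have kn: "k < n" using assms(4,5) by linarith
  obtain es0 where es0: "char_poly M = (\<Prod>a\<leftarrow>es0. [:- a, 1:])" using real_sym_splits[OF Mc sym] by blast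
  define es1 where "es1 = rev (sort es0)"
  have ms: "mset es1 = mset es0" unfolding es1_def by simp
  have P1: "sorted_wrt (\<ge>) es1 \<and> char_poly M = (\<Prod>a\<leftarrow>es1. [:- a, 1:])"
  proof
    show "sorted_wrt (\<ge>) es1" unfolding es1_def by (simp add: sorted_wrt_rev)
    have "(\<Prod>a\<leftarrow>es1. [:- a, 1:]) = (\<Prod>a\<leftarrow>es0. [:- a, 1:])"
      by (metis ms mset_map prod_mset_prod_list)
    thus "char_poly M = (\<Prod>a\<leftarrow>es1. [:- a, 1:])" using es0 by simp
  qed
  have ev: "eigenvalues_desc M = es1" unfolding eigenvalues_desc_def
  proof (rule the_equality)
    show "sorted_wrt (\<ge>) es1 \<and> char_poly M = (\<Prod>a\<leftarrow>es1. [:- a, 1:])" by (rule P1)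
    fix es assume "sorted_wrt (\<ge>) es \<and> char_poly M = (\<Prod>a\<leftarrow>es. [:- a, 1:])"
    with P1 show "es = es1" using prod_lin_mset sorted_desc_unique by metis
  qed
  have cp: "char_poly M = (\<Prod>a\<leftarrow>es1. [:- a, 1:])" using P1 by simp
  have len: "length es1 = n" using degree_monic_char_poly[OF Mc] cp degree_prod_lin by metis
  have s1: "sum_list es1 = mtr M" and s2: "sum_list (map (\<lambda>x. x^2) es1) = mtr (M * M)"
    using schur_sums[OF Mc cp] by auto
  have dr: "dim_row M = n" using Mc by simp
  have "mtr M = (\<Sum>i<n. \<alpha> * real (degree n E i))" unfolding mtr_def dr
    by (intro sum.cong refl) (use g in \<open>auto simp: M_def A_alpha_index simple_graph_def\<close>)
  also have "\<dots> = 2 * \<alpha> * m" unfolding m_def by (simp add: sum_distrib_left[symmetric] handshake[OF g])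
  finally have t1: "sum_list es1 = 2 * \<alpha> * m" using s1 by simp
  have "mtr (M * M) = (\<Sum>i<n. \<Sum>j<n. M$$(i,j) * M$$(j,i))" by (rule mtr_mult[OF Mc Mc])
  also have "\<dots> = (\<Sum>i<n. \<alpha>^2 * real (degree n E i)^2 + (1-\<alpha>)^2 * real (degree n E i))"
    unfolding M_def by (intro sum.cong refl) (simp add: row_sq[OF g])
  also have "\<dots> = \<alpha>^2 * zagreb1 n E + (1-\<alpha>)^2 * (2 * m)"
    unfolding zagreb1_def m_def by (simp add: sum.distrib sum_distrib_left[symmetric] handshake[OF g])
  finally have t2: "sum_list (map (\<lambda>x. x^2) es1) = \<alpha>^2 * zagreb1 n E + 2 * m * (1-\<alpha>)^2" using s2 by simp
  have "S_k k M = sum_list (take k es1)" unfolding S_k_def ev ..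
  also have "\<dots> \<le> real k * sum_list es1 / real n
     + sqrt (real k * (real n - real k) / real n * (sum_list (map (\<lambda>x. x^2) es1) - (sum_list es1)^2 / real n))"
    by (rule topk_bound[OF len assms(4) kn])
  also have "\<dots> = 2 * \<alpha> * real k * m / real n
    + sqrt (real k * (real n - real k) / real n *
        (\<alpha>^2 * zagreb1 n E + 2 * m * (1 - \<alpha>)^2 - 4 * \<alpha>^2 * m^2 / real n))"
    unfolding t1 t2 by (simp add: power_mult_distrib mult_ac)
  finally show ?thesis unfolding M_def m_def .
qed

end
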